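(* Let $(S,d)$ be a metric space and let $P$ be a closed, proper, non-empty subset of $S$. Define $h_P(x)=\max\big(-1,\sup_{p\in P}[1-d(x,p)]\big)$ for $x\in S$. Then $h_P\in\operatorname{ext}(B^S_{\mathrm{FM}})$. If there exists $x\in S\setminus P$ with $d(x,P)<2$, then $h_P\in\operatorname{ext}_*(B^S_{\mathrm{FM}})$; otherwise $h_P$ is a trivial extreme point, i.e. $|h_P|=\mathbf{1}$.
   Context: $\mathrm{BL}(S)$ is the space of bounded real-valued Lipschitz functions on $S$, $|f|_L=\sup_{x\neq y}|f(x)-f(y)|/d(x,y)$, $\|f\|_{\mathrm{FM}}=\max(\|f\|_\infty,|f|_L)$, $B^S_{\mathrm{FM}}=\{f\in\mathrm{BL}(S):\|f\|_{\mathrm{FM}}\le1\}$, $\operatorname{ext}$ denotes extreme points, and $\operatorname{ext}_*(B^S_{\mathrm{FM}})=\operatorname{ext}(B^S_{\mathrm{FM}})\setminus\{f\in B^S_{\mathrm{FM}}:|f|=\mathbf{1}\}$. *)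

theory Defs
  imports "HOL-Analysis.Analysis"
begin

definition BL :: "('a::metric_space \<Rightarrow> real) set" where
  "BL = {f. bounded (range f) \<and> (\<exists>L. \<forall>x y. \<bar>f x - f y\<bar> \<le> L * dist x y)}"

definition lip_seminorm :: "('a::metric_space \<Rightarrow> real) \<Rightarrow> real" where
  "lip_seminorm f = (SUP xy \<in> {(x, y). x \<noteq> y}. \<bar>f (fst xy) - f (snd xy)\<bar> / dist (fst xy) (snd xy))"

definition sup_norm :: "('a \<Rightarrow> real) \<Rightarrow> real" where
  "sup_norm f = (SUP x. \<bar>f x\<bar>)"

definition FM_norm :: "('a::metric_space \<Rightarrow> real) \<Rightarrow> real" where
  "FM_norm f = max (sup_norm f) (lip_seminorm f)"

definition FM_ball :: "('a::metric_space \<Rightarrow> real) set" where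
  "FM_ball = {f \<in> BL. FM_norm f \<le> 1}"

definition ext :: "('a \<Rightarrow> real) set \<Rightarrow> ('a \<Rightarrow> real) set" where
  "ext K = {f \<in> K. \<forall>g\<in>K. \<forall>h\<in>K. \<forall>t::real. g \<noteq> h \<and> 0 < t \<and> t < 1
              \<longrightarrow> f \<noteq> (\<lambda>x. t * g x + (1 - t) * h x)}"

definition ext_star :: "('a::metric_space \<Rightarrow> real) set" where
  "ext_star = ext FM_ball - {f \<in> FM_ball. \<forall>x. \<bar>f x\<bar> = 1}"

definition hP :: "'a::metric_space set \<Rightarrow> 'a \<Rightarrow> real" where
  "hP P x = max (-1) (SUP p \<in> P. 1 - dist x p)"

end

theory Submission
  imports Defs
begin

lemma maxlip: fixes a b c :: real assumes "\<bar>a - b\<bar> \<le> c" shows "\<bar>max (-1) (1 - a) - max (-1) (1 - b)\<bar> \<le> c"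
  using assms unfolding max_def abs_le_iff by auto

lemma hP_eq:
  fixes P :: "'a::metric_space set"
  assumes "P \<noteq> {}"
  shows "hP P x = max (-1) (1 - infdist x P)"
proof -
  have bdd: "bdd_above ((\<lambda>p. 1 - dist x p) ` P)"
    by (rule bdd_aboveI[where M=1]) auto
  have "(SUP p \<in> P. 1 - dist x p) = 1 - infdist x P"
  proof (rule antisym)
    show "(SUP p \<in> P. 1 - dist x p) \<le> 1 - infdist x P"
      using assms by (intro cSUP_least) (auto simp: infdist_le)
    have "1 - (SUP p \<in> P. 1 - dist x p) \<le> infdist x P"
      unfolding infdist_notempty[OF assms]
    proof (intro cINF_greatest[OF assms])
      fix p assume "p \<in> P"
      then have "1 - dist x p \<le> (SUP p \<in> P. 1 - dist x p)" by (intro cSUP_upper[OF _ bdd])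
      then show "1 - (SUP p \<in> P. 1 - dist x p) \<le> dist x p" by simp
    qed
    then show "1 - infdist x P \<le> (SUP p \<in> P. 1 - dist x p)" by simp
  qed
  then show ?thesis unfolding hP_def by simp
qed

lemma FM_ball_abs:
  assumes "g \<in> FM_ball"
  shows "\<bar>g x\<bar> \<le> 1"
proof -
  from assms have b: "bounded (range g)" and n: "FM_norm g \<le> 1"
    unfolding FM_ball_def BL_def by auto
  from b obtain B where "\<forall>y\<in>range g. norm y \<le> B" by (auto simp: bounded_iff)
  then have "bdd_above (range (\<lambda>x. \<bar>g x\<bar>))" by (intro bdd_aboveI[where M=B]) auto
  then have "\<bar>g x\<bar> \<le> sup_norm g" unfolding sup_norm_def by (intro cSUP_upper) auto
  also have "\<dots> \<le> 1" using n unfolding FM_norm_def by simp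
  finally show ?thesis .
qed

lemma FM_ball_lip:
  assumes "g \<in> FM_ball"
  shows "\<bar>g x - g y\<bar> \<le> dist x y"
proof (cases "x = y")
  case True then show ?thesis by simp
next
  case False
  from assms obtain L where L: "\<forall>x y. \<bar>g x - g y\<bar> \<le> L * dist x y" and n: "FM_norm g \<le> 1"
    unfolding FM_ball_def BL_def by auto
  have "bdd_above ((\<lambda>xy. \<bar>g (fst xy) - g (snd xy)\<bar> / dist (fst xy) (snd xy)) ` {(x, y). x \<noteq> y})"
  proof (rule bdd_aboveI[where M=L])
    fix q assume "q \<in> (\<lambda>xy. \<bar>g (fst xy) - g (snd xy)\<bar> / dist (fst xy) (snd xy)) ` {(x, y). x \<noteq> y}"
    then obtain a b where q: "q = \<bar>g a - g b\<bar> / dist a b" and "a \<noteq> b" by auto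
    then have "dist a b > 0" by simp
    then show "q \<le> L" using L[rule_format, of a b] unfolding q by (simp add: divide_le_eq)
  qed
  then have "\<bar>g x - g y\<bar> / dist x y \<le> lip_seminorm g"
    unfolding lip_seminorm_def using False by (intro cSUP_upper2[where x="(x,y)"]) auto
  also have "\<dots> \<le> 1" using n unfolding FM_norm_def by simp
  finally show ?thesis using False by (simp add: divide_le_eq)
qed

theorem lemmaC2:
  fixes P :: "'a::metric_space set"
  assumes "closed P" and "P \<noteq> UNIV" and "P \<noteq> {}"
  shows "hP P \<in> ext FM_ball
    \<and> ((\<exists>x. x \<notin> P \<and> infdist x P < 2) \<longrightarrow> hP P \<in> ext_star)
    \<and> (\<not> (\<exists>x. x \<notin> P \<and> infdist x P < 2) \<longrightarrow> (\<forall>x. \<bar>hP P x\<bar> = 1))"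
proof -
  define h where "h = hP P"
  have h: "h x = max (-1) (1 - infdist x P)" for x
    unfolding h_def using hP_eq[OF assms(3)] by simp
  have habs: "\<bar>h x\<bar> \<le> 1" for x using h[of x] infdist_nonneg[of x P] by simp
  have hlip: "\<bar>h x - h y\<bar> \<le> dist x y" for x y
    unfolding h by (rule maxlip) (rule infdist_triangle_abs)
  obtain p where p: "p \<in> P" using assms(3) by auto
  obtain q where q: "q \<notin> P" using assms(2) by auto
  have hBL: "h \<in> BL"
    unfolding BL_def
  proof safe
    show "bounded (range h)" using habs by (intro boundedI[where B=1]) auto
    show "\<exists>L. \<forall>x y. \<bar>h x - h y\<bar> \<le> L * dist x y" using hlip by (intro exI[where x=1]) auto
  qed
  have "sup_norm h \<le> 1" unfolding sup_norm_def using habs by (intro cSUP_least) auto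
  moreover have "lip_seminorm h \<le> 1"
    unfolding lip_seminorm_def
  proof (rule cSUP_least)
    have pq: "p \<noteq> q" using p q by blast
    show "{(x, y). x \<noteq> y} \<noteq> ({} :: ('a \<times> 'a) set)"
    proof
      assume e: "{(x, y). x \<noteq> y} = ({} :: ('a \<times> 'a) set)"
      have "(p, q) \<in> {(x, y). x \<noteq> y}" using pq by simp
      then show False unfolding e by simp
    qed
    fix xy :: "'a \<times> 'a" assume "xy \<in> {(x, y). x \<noteq> y}"
    then have "dist (fst xy) (snd xy) > 0" by auto
    then show "\<bar>h (fst xy) - h (snd xy)\<bar> / dist (fst xy) (snd xy) \<le> 1"
      using hlip[of "fst xy" "snd xy"] by (simp add: divide_le_eq)
  qed
  ultimately have hball: "h \<in> FM_ball" using hBL unfolding FM_ball_def FM_norm_def by simp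
  have lower: "h x \<le> g x" if g: "g \<in> FM_ball" and gP: "\<forall>p\<in>P. g p = 1" for g x
  proof -
    have "1 - g x \<le> infdist x P"
      unfolding infdist_notempty[OF assms(3)]
    proof (rule cINF_greatest[OF assms(3)])
      fix p assume "p \<in> P"
      then show "1 - g x \<le> dist x p" using FM_ball_lip[OF g, of x p] gP by auto
    qed
    moreover have "-1 \<le> g x" using FM_ball_abs[OF g, of x] by linarith
    ultimately show ?thesis unfolding h[of x] by simp
  qed
  have ext: "h \<in> ext FM_ball"
    unfolding ext_def
  proof (safe intro!: hball)
    fix g k :: "'a \<Rightarrow> real" and t :: real
    assume g: "g \<in> FM_ball" and k: "k \<in> FM_ball" and ne: "g \<noteq> k" and t: "0 < t" "t < 1"
      and eq: "h = (\<lambda>x. t * g x + (1 - t) * k x)"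
    have hP1: "h p = 1" if "p \<in> P" for p using h[of p] that by simp
    have gk1: "g p = 1 \<and> k p = 1" if "p \<in> P" for p
    proof -
      define a where "a = t * g p"
      define b where "b = (1 - t) * k p"
      have "a + b = 1" using hP1[OF that] eq unfolding a_def b_def by metis
      moreover have "g p \<le> 1" "k p \<le> 1" using FM_ball_abs[OF g, of p] FM_ball_abs[OF k, of p] by auto
      moreover have "a \<le> t" using mult_left_mono[of "g p" 1 t] t \<open>g p \<le> 1\<close> unfolding a_def by simp
      moreover have "b \<le> 1 - t" using mult_left_mono[of "k p" 1 "1 - t"] t \<open>k p \<le> 1\<close> unfolding b_def by simp
      ultimately have "a = t" "b = 1 - t" by linarith+
      then have "t * g p = t * 1" "(1 - t) * k p = (1 - t) * 1" unfolding a_def b_def by simp_all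
      then show ?thesis using t by simp
    qed
    have "g x = k x" for x
    proof -
      have a: "h x \<le> g x" by (rule lower[OF g]) (use gk1 in auto)
      have b: "h x \<le> k x" by (rule lower[OF k]) (use gk1 in auto)
      have c: "h x = t * g x + (1 - t) * k x" using eq by metis
      have "t * (g x - h x) + (1 - t) * (k x - h x) = 0" using c by (simp add: algebra_simps)
      moreover have "t * (g x - h x) \<ge> 0" "(1 - t) * (k x - h x) \<ge> 0" using a b t by auto
      ultimately have "t * (g x - h x) = 0" "(1 - t) * (k x - h x) = 0" by linarith+
      then show ?thesis using t by auto
    qed
    then show False using ne by auto
  qed
  have part2: "h \<in> ext_star" if "\<exists>x. x \<notin> P \<and> infdist x P < 2"
  proof -
    from that obtain x where x: "x \<notin> P" "infdist x P < 2" by auto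
    have "infdist x P > 0" using infdist_pos_not_in_closed[OF assms(1) assms(3) x(1)] .
    then have "\<bar>h x\<bar> \<noteq> 1" using h[of x] x(2) by auto
    then show ?thesis unfolding ext_star_def using ext by auto
  qed
  have part3: "\<bar>h x\<bar> = 1" if "\<not> (\<exists>x. x \<notin> P \<and> infdist x P < 2)" for x
  proof (cases "x \<in> P")
    case True then show ?thesis using h[of x] by simp
  next
    case False
    then have "infdist x P \<ge> 2" using that by (meson not_less)
    then show ?thesis unfolding h[of x] by simp
  qed
  show ?thesis using ext part2 part3 unfolding h_def by blast
qed

end
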